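(* For all integers $r \geq 2$ and $k \geq 3$, we have $P_r(k) > (k-1) r$.
   Context: A colour pattern on a vertex set $V$ is a sequence $G_1,\dots,G_r$ of pairwise edge-disjoint graphs all having vertex set $V$; it is $K_{k+1}$-free if no $G_i$ contains $K_{k+1}$. Given a colour pattern $G_1,\dots,G_r$ on $V$ and a colouring $c: V \to [r]$, a strongly monochromatic $K_k$ is a set of $k$ vertices all receiving the same colour $i$ under $c$ and forming a clique in $G_i$. $P_r(k)$ is the smallest integer $n$ such that there exists a $K_{k+1}$-free colour pattern $G_1,\dots,G_r$ on an $n$-element vertex set $V$ such that every colouring $V \to [r]$ yields a strongly monochromatic $K_k$. *)

theory Defs
  imports Main
begin

definition graph_on :: "'a set \<Rightarrow> 'a set set \<Rightarrow> bool" where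
  "graph_on V E \<longleftrightarrow> (\<forall>e\<in>E. e \<subseteq> V \<and> card e = 2)"

definition clique_in :: "'a set set \<Rightarrow> 'a set \<Rightarrow> bool" where
  "clique_in E S \<longleftrightarrow> (\<forall>x\<in>S. \<forall>y\<in>S. x \<noteq> y \<longrightarrow> {x, y} \<in> E)"

definition colour_pattern :: "nat \<Rightarrow> 'a set \<Rightarrow> (nat \<Rightarrow> 'a set set) \<Rightarrow> bool" where
  "colour_pattern r V G \<longleftrightarrow>
     (\<forall>i\<in>{1..r}. graph_on V (G i)) \<and>
     (\<forall>i\<in>{1..r}. \<forall>j\<in>{1..r}. i \<noteq> j \<longrightarrow> G i \<inter> G j = {})"

definition pattern_clique_free :: "nat \<Rightarrow> nat \<Rightarrow> 'a set \<Rightarrow> (nat \<Rightarrow> 'a set set) \<Rightarrow> bool" where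
  "pattern_clique_free r m V G \<longleftrightarrow>
     (\<forall>i\<in>{1..r}. \<not> (\<exists>S. S \<subseteq> V \<and> card S = m \<and> clique_in (G i) S))"

definition strongly_mono_clique :: "nat \<Rightarrow> nat \<Rightarrow> 'a set \<Rightarrow> (nat \<Rightarrow> 'a set set) \<Rightarrow> ('a \<Rightarrow> nat) \<Rightarrow> bool" where
  "strongly_mono_clique r k V G c \<longleftrightarrow>
     (\<exists>S i. i \<in> {1..r} \<and> S \<subseteq> V \<and> card S = k \<and> (\<forall>v\<in>S. c v = i) \<and> clique_in (G i) S)"

definition P_witness :: "nat \<Rightarrow> nat \<Rightarrow> nat \<Rightarrow> bool" where
  "P_witness r k n \<longleftrightarrow>
     (\<exists>(V :: nat set) G. finite V \<and> card V = n \<and> colour_pattern r V G \<and>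
        pattern_clique_free r (k + 1) V G \<and>
        (\<forall>c. (\<forall>v\<in>V. c v \<in> {1..r}) \<longrightarrow> strongly_mono_clique r k V G c))"

definition P :: "nat \<Rightarrow> nat \<Rightarrow> nat" where
  "P r k = (LEAST n. P_witness r k n)"

end

theory Submission
  imports Defs
begin

theorem lemma3p1:
  fixes r k n :: nat
  assumes "r \<ge> 2" and "k \<ge> 3"
  assumes "P_witness r k n"
  shows "(k - 1) * r < n"
proof (rule ccontr)
  assume nle: "\<not> (k - 1) * r < n"
  define m where "m = k - 1"
  have m1: "m \<ge> 1" using assms(2) m_def by simp
  have nle': "n \<le> m * r" using nle m_def by simp
  obtain V :: "nat set" and G where fin: "finite V" and cV: "card V = n"
    and all: "\<forall>c. (\<forall>v\<in>V. c v \<in> {1..r}) \<longrightarrow> strongly_mono_clique r k V G c"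
    using assms(3) unfolding P_witness_def by blast
  obtain f where bf: "bij_betw f V {0..<card V}" using ex_bij_betw_finite_nat[OF fin] by blast
  define c where "c v = f v div m + 1" for v
  have "\<forall>v\<in>V. c v \<in> {1..r}"
  proof
    fix v assume "v \<in> V"
    then have "f v < n" using bf cV by (auto simp: bij_betw_def)
    then have "f v < m * r" using nle' by simp
    then have "f v div m < r" using m1 by (simp add: less_mult_imp_div_less mult.commute)
    then show "c v \<in> {1..r}" by (simp add: c_def)
  qed
  then have "strongly_mono_clique r k V G c" using all by blast
  then obtain S i where S: "S \<subseteq> V" "card S = k" "\<forall>v\<in>S. c v = i"
    unfolding strongly_mono_clique_def by blast
  have inj: "inj_on f S" using bf S(1) by (auto simp: bij_betw_def intro: inj_on_subset)
  have "f ` S \<subseteq> {(i - 1) * m ..< (i - 1) * m + m}"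
  proof
    fix x assume "x \<in> f ` S"
    then obtain v where v: "v \<in> S" "x = f v" by blast
    then have "f v div m = i - 1" using S(3) by (auto simp: c_def)
    then show "x \<in> {(i - 1) * m ..< (i - 1) * m + m}" using v m1
    proof -
      have "x = (i - 1) * m + x mod m" using `f v div m = i - 1` v(2)
        by (metis div_mult_mod_eq mult.commute)
      moreover have "x mod m < m" using m1 by simp
      ultimately show ?thesis by (metis atLeastLessThan_iff le_add1 nat_add_left_cancel_less)
    qed
  qed
  then have "card (f ` S) \<le> m" using card_mono[of "{(i - 1) * m ..< (i - 1) * m + m}"] by fastforce
  then have "card S \<le> m" using card_image[OF inj] by simp
  then show False using S(2) m_def assms(2) by simp
qed

end
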